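(* Let $k\in\mathbb N$, $a=\pi/k$, $\alpha,\beta\in\{0,1\}$, $q\in L_2(0,\pi)$, and let $W_{\alpha,\beta}=\frac{(-1)^{\alpha\beta}}{2}Q^{-1}A_{\alpha,\beta}Rq$ (notation in the context). In the non-degenerate case the following hold for a.e. $x\in(0,a)$: (iv) if $\alpha=0$, $\beta=1$: $q(x)=W_{0,1}(x)+\sum_{j=1}^{(k-1)/2}\big(W_{0,1}(2ja+x)-W_{0,1}(2ja-x)\big)$ when $k$ is odd, and $q(x)=\sum_{j=1}^{k/2}\big(W_{0,1}((2j-1)a+x)-W_{0,1}((2j-1)a-x)\big)$ when $k$ is even; (v) if $\alpha=1$, $\beta=0$ and $k$ is even: $q(x)=\sum_{j=1}^{k/2}(-1)^j\big(W_{1,0}((k+1-2j)a-x)+W_{1,0}((k+1-2j)a+x)\big)$; (vi) if $\alpha=\beta=1$ and $k$ is odd: $q(x)=(-1)^{\frac{k+1}2}\Big(W_{1,1}(x)+\sum_{j=1}^{(k-1)/2}(-1)^j\big(W_{1,1}(2ja+x)+W_{1,1}(2ja-x)\big)\Big)$.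
   Context: For $f\in L_2(0,\pi)$, $t\in(0,a)$, $m=1,\dots,k$: $R_mf(t)=f(t+(k-m)a)$ for odd $m$ and $R_mf(t)=f((k-m+1)a-t)$ for even $m$; $Q_mf(t)=f(t+(m-1)a)$ for odd $m$ and $Q_mf(t)=f(ma-t)$ for even $m$. The (invertible) operators $R,Q:L_2(0,\pi)\to(L_2(0,a))^k$ are $Rf=(R_1f,\dots,R_kf)^T$, $Qf=(Q_1f,\dots,Q_kf)^T$. Let $b=(-1)^{\alpha+\beta}$, $c=(-1)^{1+\beta}$. For $k>1$, $A_{\alpha,\beta}$ is the $k\times k$ tridiagonal matrix whose $(1,1)$ entry is $1$, whose $(k,k)$ entry is $c$, whose other diagonal entries are $0$, whose superdiagonal entries are all $b$ and whose subdiagonal entries are all $c$; for $k=1$, $A_{\alpha,\beta}=2(-1)^{\alpha(\beta+1)}\delta_{1,\beta}$. The non-degenerate case means one of: (iv) $\alpha=0,\beta=1$; (v) $\alpha=1,\beta=0$, $k$ even; (vi) $\alpha=\beta=1$, $k$ odd. *)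

theory Defs
  imports "HOL-Analysis.Analysis"
begin

text \<open>Membership in L_2(0,pi) (functions are represented pointwise; a.e.-equivalence
  is handled by stating conclusions almost everywhere).\<close>
definition in_L2 :: "(real \<Rightarrow> complex) \<Rightarrow> real \<Rightarrow> real \<Rightarrow> bool" where
  "in_L2 f l u \<longleftrightarrow> f \<in> borel_measurable (lebesgue_on {l<..<u})
     \<and> integrable (lebesgue_on {l<..<u}) (\<lambda>x. (norm (f x))^2)"

definition stp :: "nat \<Rightarrow> real" where "stp k = pi / real k"

text \<open>Operator R: component m (1 \<le> m \<le> k), as a function on (0,a).\<close>
definition Rop :: "nat \<Rightarrow> (real \<Rightarrow> complex) \<Rightarrow> nat \<Rightarrow> real \<Rightarrow> complex" where
  "Rop k f m t = (if odd m then f (t + real (k - m) * stp k)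
                   else f (real (k - m + 1) * stp k - t))"

text \<open>Operator Q: component m (1 \<le> m \<le> k), as a function on (0,a).\<close>
definition Qop :: "nat \<Rightarrow> (real \<Rightarrow> complex) \<Rightarrow> nat \<Rightarrow> real \<Rightarrow> complex" where
  "Qop k f m t = (if odd m then f (t + real (m - 1) * stp k)
                   else f (real m * stp k - t))"

text \<open>Inverse of Q: given g = (g_1,...,g_k) on (0,a), the function on (0,pi) whose
  restriction to ((m-1)a, ma) is determined by Q_m f = g_m
  (values at the points j*a are irrelevant, being a null set).\<close>
definition Qinv :: "nat \<Rightarrow> (nat \<Rightarrow> real \<Rightarrow> complex) \<Rightarrow> real \<Rightarrow> complex" where
  "Qinv k g x = (let m = nat \<lfloor>x / stp k\<rfloor> + 1 in
                  if odd m then g m (x - real (m - 1) * stp k)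
                  else g m (real m * stp k - x))"

definition Amat :: "nat \<Rightarrow> nat \<Rightarrow> nat \<Rightarrow> nat \<Rightarrow> nat \<Rightarrow> complex" where
  "Amat \<alpha> \<beta> k i j =
    (let b = (-1::complex) ^ (\<alpha> + \<beta>); c = (-1::complex) ^ (1 + \<beta>) in
     if k = 1 then 2 * (-1) ^ (\<alpha> * (\<beta> + 1)) * (if \<beta> = 1 then 1 else 0)
     else if i = j then (if i = 1 then 1 else if i = k then c else 0)
     else if j = i + 1 then b
     else if i = j + 1 then c
     else 0)"

definition Aapp :: "nat \<Rightarrow> nat \<Rightarrow> nat \<Rightarrow> (nat \<Rightarrow> real \<Rightarrow> complex) \<Rightarrow> nat \<Rightarrow> real \<Rightarrow> complex" where
  "Aapp \<alpha> \<beta> k g i t = (\<Sum>j=1..k. Amat \<alpha> \<beta> k i j * g j t)"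

definition Wfun :: "nat \<Rightarrow> nat \<Rightarrow> nat \<Rightarrow> (real \<Rightarrow> complex) \<Rightarrow> real \<Rightarrow> complex" where
  "Wfun \<alpha> \<beta> k q x = ((-1) ^ (\<alpha> * \<beta>) / 2) * Qinv k (Aapp \<alpha> \<beta> k (Rop k q)) x"

definition nondegenerate :: "nat \<Rightarrow> nat \<Rightarrow> nat \<Rightarrow> bool" where
  "nondegenerate \<alpha> \<beta> k \<longleftrightarrow> (\<alpha> = 0 \<and> \<beta> = 1) \<or> (\<alpha> = 1 \<and> \<beta> = 0 \<and> even k)
      \<or> (\<alpha> = 1 \<and> \<beta> = 1 \<and> odd k)"

end

theory Submission
  imports Defs
begin


definition Gx :: "nat \<Rightarrow> (nat \<Rightarrow> real \<Rightarrow> complex) \<Rightarrow> real \<Rightarrow> nat \<Rightarrow> complex" where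
  "Gx k g t m = (if 1 \<le> m \<and> m \<le> k then g m t else 0)"

lemma stp_pos: "k \<ge> 1 \<Longrightarrow> stp k > 0"
  by (simp add: stp_def)

lemma W_plus:
  assumes "k \<ge> 1" "0 < x" "x < stp k"
  shows "Wfun \<alpha> \<beta> k q (real m * stp k + x) =
     ((-1) ^ (\<alpha> * \<beta>) / 2) * Aapp \<alpha> \<beta> k (Rop k q) (Suc m) (if even m then x else stp k - x)"
proof -
  have a: "stp k > 0" using assms stp_pos by auto
  have "(real m * stp k + x) / stp k = real m + x / stp k" using a by (simp add: field_simps)
  moreover have "0 \<le> x / stp k" "x / stp k < 1" using a assms by auto
  ultimately have f: "\<lfloor>(real m * stp k + x) / stp k\<rfloor> = int m"
    by (simp add: floor_eq_iff)
  show ?thesis unfolding Wfun_def Qinv_def Let_def f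
    by (auto simp: algebra_simps)
qed

lemma W_minus:
  assumes "k \<ge> 1" "0 < x" "x < stp k" "m \<ge> 1"
  shows "Wfun \<alpha> \<beta> k q (real m * stp k - x) =
     ((-1) ^ (\<alpha> * \<beta>) / 2) * Aapp \<alpha> \<beta> k (Rop k q) m (if odd m then stp k - x else x)"
proof -
  have a: "stp k > 0" using assms stp_pos by auto
  have "(real m * stp k - x) / stp k = real (m - 1) + (1 - x / stp k)" using a assms(4) by (simp add: field_simps of_nat_diff)
  moreover have "0 \<le> 1 - x / stp k" "1 - x / stp k < 1" using a assms by auto
  ultimately have f: "\<lfloor>(real m * stp k - x) / stp k\<rfloor> = int (m - 1)"
    by (simp add: floor_eq_iff)
  have m: "nat (int (m - 1)) + 1 = m" using assms(4) by simp
  show ?thesis unfolding Wfun_def Qinv_def Let_def f m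
    using assms(4) by (auto simp: algebra_simps of_nat_diff)
qed

lemma Amat_split:
  assumes "k \<noteq> 1"
  shows "Amat \<alpha> \<beta> k i j = (if j = i then (if i = 1 then 1 else 0) + (if i = k then (-1) ^ (1 + \<beta>) else 0) else 0)
     + (if j = i + 1 then (-1) ^ (\<alpha> + \<beta>) else 0) + (if j + 1 = i then (-1) ^ (1 + \<beta>) else 0)"
  using assms unfolding Amat_def Let_def by auto

lemma Aapp_expand:
  assumes "k \<ge> 2" "1 \<le> i" "i \<le> k"
  shows "Aapp \<alpha> \<beta> k g i t = (if i = 1 then Gx k g t 1 else 0) + (-1) ^ (1 + \<beta>) * Gx k g t (i - 1)
     + (if i = k then (-1) ^ (1 + \<beta>) * Gx k g t k else 0) + (-1) ^ (\<alpha> + \<beta>) * Gx k g t (i + 1)"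
proof -
  have "Aapp \<alpha> \<beta> k g i t = (\<Sum>j=1..k. (if j = i then ((if i = 1 then 1 else 0) + (if i = k then (-1) ^ (1 + \<beta>) else 0)) * g j t else 0)
     + (if j = i + 1 then (-1) ^ (\<alpha> + \<beta>) * g j t else 0) + (if j = i - 1 \<and> i \<ge> 2 then (-1) ^ (1 + \<beta>) * g j t else 0))"
    unfolding Aapp_def
    apply (rule sum.cong[OF refl])
    using assms by (auto simp: Amat_split distrib_right)
  also have "\<dots> = (\<Sum>j=1..k. (if j = i then ((if i = 1 then 1 else 0) + (if i = k then (-1) ^ (1 + \<beta>) else 0)) * g j t else 0))
     + (\<Sum>j=1..k. (if j = i + 1 then (-1) ^ (\<alpha> + \<beta>) * g j t else 0)) + (\<Sum>j=1..k. (if j = i - 1 \<and> i \<ge> 2 then (-1) ^ (1 + \<beta>) * g j t else 0))"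
    by (simp add: sum.distrib)
  also have "\<dots> = (if i = 1 then Gx k g t 1 else 0) + (-1) ^ (1 + \<beta>) * Gx k g t (i - 1)
     + (if i = k then (-1) ^ (1 + \<beta>) * Gx k g t k else 0) + (-1) ^ (\<alpha> + \<beta>) * Gx k g t (i + 1)"
  proof -
    have e1: "(\<Sum>j=1..k. (if j = i then ((if i = 1 then 1 else 0) + (if i = k then (-1) ^ (1 + \<beta>) else 0)) * g j t else 0))
      = (if i = 1 then Gx k g t 1 else 0) + (if i = k then (-1) ^ (1 + \<beta>) * Gx k g t k else 0)"
      using assms by (simp add: sum.delta Gx_def distrib_right)
    have e2: "(\<Sum>j=1..k. (if j = i + 1 then (-1) ^ (\<alpha> + \<beta>) * g j t else 0)) = (-1) ^ (\<alpha> + \<beta>) * Gx k g t (i + 1)"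
      using assms by (simp add: sum.delta Gx_def)
    have e3: "(\<Sum>j=1..k. (if j = i - 1 \<and> i \<ge> 2 then (-1) ^ (1 + \<beta>) * g j t else 0)) = (-1) ^ (1 + \<beta>) * Gx k g t (i - 1)"
      using assms by (cases "i \<ge> 2") (auto simp: sum.delta Gx_def)
    show ?thesis using e1 e2 e3 by (simp add: algebra_simps)
  qed
  finally show ?thesis .
qed

lemma tel1: fixes n :: nat shows "(\<Sum>j=1..n. (-1::complex) ^ j * (u j + u (Suc j))) = (-1) ^ n * u (Suc n) - u 1"
  by (induction n) (auto simp: algebra_simps)

lemma tel2: fixes n :: nat shows "(\<Sum>j=1..n. (-1::complex) ^ j * (u j + u (j - 1))) = (-1) ^ n * u n - u 0"
  by (induction n) (auto simp: algebra_simps)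

lemma tel3: fixes n :: nat shows "(\<Sum>j=1..n. (f (j - 1) - f j::complex)) = f 0 - f n"
  by (induction n) (auto simp: algebra_simps)




lemma case_iv_odd:
  assumes k: "k = 2 * n + 1" "n \<ge> 1" and x: "0 < x" "x < stp k"
  shows "q x = Wfun 0 1 k q x + (\<Sum>j=1..(k - 1) div 2.
                 Wfun 0 1 k q (2 * real j * stp k + x) - Wfun 0 1 k q (2 * real j * stp k - x))"
proof -
  define G where "G = Gx k (Rop k q) x"
  define C :: complex where "C = 1/2"
  define W where "W = Wfun 0 1 k q"
  have k1: "k \<ge> 1" "k \<ge> 2" using k by auto
  have nd: "(k - 1) div 2 = n" using k by simp
  have W0: "W x = C * (G 1 + G 0 - G 2)"
  proof -
    have "W x = W (real 0 * stp k + x)" by simp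
    also have "\<dots> = C * Aapp 0 1 k (Rop k q) 1 x" unfolding W_def C_def using W_plus[OF k1(1) x, of 0 1 q 0] by simp
    also have "\<dots> = C * (G 1 + G 0 - G 2)" using Aapp_expand[OF k1(2), of 1 0 1 "Rop k q" x] k1 by (simp add: G_def numeral_2_eq_2)
    finally show ?thesis .
  qed
  have S: "(\<Sum>j=1..n. W (2 * real j * stp k + x) - W (2 * real j * stp k - x))
     = (\<Sum>j=1..n. C * ((G (2*(j-1)+2) - G (2*j+2)) - (G (2*(j-1)+1) - G (2*j+1)) + (if j = n then G k else 0)))"
  proof (rule sum.cong[OF refl])
    fix j assume j: "j \<in> {1..n}"
    have e1: "2 * real j * stp k + x = real (2*j) * stp k + x" by simp
    have e2: "2 * real j * stp k - x = real (2*j) * stp k - x" by simp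
    have p: "W (2 * real j * stp k + x) = C * Aapp 0 1 k (Rop k q) (Suc (2*j)) x"
      unfolding e1 W_def C_def using W_plus[OF k1(1) x, of 0 1 q "2*j"] by simp
    have m: "W (2 * real j * stp k - x) = C * Aapp 0 1 k (Rop k q) (2*j) x"
      unfolding e2 W_def C_def using W_minus[OF k1(1) x, of "2*j" 0 1 q] j by simp
    have a1: "Aapp 0 1 k (Rop k q) (Suc (2*j)) x = G (2*j) + (if j = n then G k else 0) - G (2*j+2)"
      using Aapp_expand[OF k1(2), of "Suc (2*j)" 0 1 "Rop k q" x] j k by (simp add: G_def)
    have a2: "Aapp 0 1 k (Rop k q) (2*j) x = G (2*j-1) - G (2*j+1)"
      using Aapp_expand[OF k1(2), of "2*j" 0 1 "Rop k q" x] j k by (simp add: G_def)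
    have f1: "2*(j-1)+2 = 2*j" "2*(j-1)+1 = 2*j-1" using j by auto
    show "W (2 * real j * stp k + x) - W (2 * real j * stp k - x)
      = C * ((G (2*(j-1)+2) - G (2*j+2)) - (G (2*(j-1)+1) - G (2*j+1)) + (if j = n then G k else 0))"
      unfolding p m a1 a2 f1 by (simp add: algebra_simps)
  qed
  also have "\<dots> = C * ((G 2 - G (2*n+2)) - (G 1 - G (2*n+1)) + G k)"
    using tel3[of "\<lambda>j. G (2*j+2)" n] tel3[of "\<lambda>j. G (2*j+1)" n] k
    by (simp add: sum_distrib_left[symmetric] sum.distrib sum_subtractf numeral_2_eq_2)
  finally have S2: "(\<Sum>j=1..n. W (2 * real j * stp k + x) - W (2 * real j * stp k - x)) = C * ((G 2 - G (2*n+2)) - (G 1 - G (2*n+1)) + G k)" .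
  have g0: "G 0 = 0" "G (2*n+2) = 0" using k by (auto simp: G_def Gx_def)
  have gk: "G k = q x" "G (2*n+1) = q x" using k by (auto simp: G_def Gx_def Rop_def)
  show ?thesis unfolding nd W_def[symmetric] W0 S2 using g0 gk by (simp add: C_def algebra_simps)
qed

lemma case_iv_even:
  assumes k: "k = 2 * n" "n \<ge> 1" and x: "0 < x" "x < stp k"
  shows "q x = (\<Sum>j=1..k div 2.
                 Wfun 0 1 k q ((2 * real j - 1) * stp k + x) - Wfun 0 1 k q ((2 * real j - 1) * stp k - x))"
proof -
  define y where "y = stp k - x"
  define G where "G = Gx k (Rop k q) y"
  define C :: complex where "C = 1/2"
  define W where "W = Wfun 0 1 k q"
  have k1: "k \<ge> 1" "k \<ge> 2" using k by auto
  have nd: "k div 2 = n" using k by simp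
  have S: "(\<Sum>j=1..n. W ((2 * real j - 1) * stp k + x) - W ((2 * real j - 1) * stp k - x))
     = (\<Sum>j=1..n. C * ((G (2*(j-1)+1) - G (2*j+1)) - (G (2*(j-1)) - G (2*j))
          + (if j = n then G k else 0) - (if j = 1 then G 1 else 0)))"
  proof (rule sum.cong[OF refl])
    fix j assume j: "j \<in> {1..n}"
    have e1: "(2 * real j - 1) * stp k + x = real (2*j-1) * stp k + x" using j by (simp add: of_nat_diff)
    have e2: "(2 * real j - 1) * stp k - x = real (2*j-1) * stp k - x" using j by (simp add: of_nat_diff)
    have s: "Suc (2*j-1) = 2*j" using j by auto
    have p: "W ((2 * real j - 1) * stp k + x) = C * Aapp 0 1 k (Rop k q) (2*j) y"
      unfolding e1 W_def C_def y_def using W_plus[OF k1(1) x, of 0 1 q "2*j-1"] j s by auto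
    have m: "W ((2 * real j - 1) * stp k - x) = C * Aapp 0 1 k (Rop k q) (2*j-1) y"
      unfolding e2 W_def C_def y_def using W_minus[OF k1(1) x, of "2*j-1" 0 1 q] j by auto
    have a1: "Aapp 0 1 k (Rop k q) (2*j) y = G (2*j-1) + (if j = n then G k else 0) - G (2*j+1)"
      using Aapp_expand[OF k1(2), of "2*j" 0 1 "Rop k q" y] j k by (simp add: G_def)
    have ff: "2*j-1 \<noteq> k" "(2*j-1 = 1) = (j = 1)" "2*j-1-1 = 2*j-2" "1 \<le> 2*j-1" "2*j-1 \<le> k" "2*j-1+1 = 2*j"
      using j k by auto
    have a2: "Aapp 0 1 k (Rop k q) (2*j-1) y = (if j = 1 then G 1 else 0) + G (2*j-2) - G (2*j)"
      using Aapp_expand[OF k1(2) ff(4,5), of 0 1 "Rop k q" y] unfolding ff using ff(1) by (simp add: G_def)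
    have g1: "G (2*(j-1)+1) = G (2*j-1)" "G (2*(j-1)) = G (2*j-2)" using j by (cases j, auto)+
    show "W ((2 * real j - 1) * stp k + x) - W ((2 * real j - 1) * stp k - x)
      = C * ((G (2*(j-1)+1) - G (2*j+1)) - (G (2*(j-1)) - G (2*j))
          + (if j = n then G k else 0) - (if j = 1 then G 1 else 0))"
      unfolding p m a1 a2 g1 by (simp add: algebra_simps)
  qed
  also have "\<dots> = C * ((G 1 - G (2*n+1)) - (G 0 - G (2*n)) + G k - G 1)"
    using tel3[of "\<lambda>j. G (2*j+1)" n] tel3[of "\<lambda>j. G (2*j)" n] k
    by (simp add: sum_distrib_left[symmetric] sum.distrib sum_subtractf)
  finally have S2: "(\<Sum>j=1..n. W ((2 * real j - 1) * stp k + x) - W ((2 * real j - 1) * stp k - x)) = C * ((G 1 - G (2*n+1)) - (G 0 - G (2*n)) + G k - G 1)" .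
  have g0: "G 0 = 0" "G (2*n+1) = 0" using k by (auto simp: G_def Gx_def)
  have gk: "G k = q x" "G (2*n) = q x" using k by (auto simp: G_def Gx_def Rop_def y_def)
  show ?thesis unfolding nd W_def[symmetric] S2 using g0 gk by (simp add: C_def algebra_simps)
qed

lemma case_v:
  assumes k: "k = 2 * n" "n \<ge> 1" and x: "0 < x" "x < stp k"
  shows "q x = (\<Sum>j=1..k div 2. (-1) ^ j *
                 (Wfun 1 0 k q ((real k + 1 - 2 * real j) * stp k - x)
                  + Wfun 1 0 k q ((real k + 1 - 2 * real j) * stp k + x)))"
proof -
  define y where "y = stp k - x"
  define G where "G = Gx k (Rop k q) y"
  define C :: complex where "C = 1/2"
  define W where "W = Wfun 1 0 k q"
  define u where "u j = G (2*(n-j)) + G (2*(n-j)+1)" for j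
  have k1: "k \<ge> 1" "k \<ge> 2" using k by auto
  have nd: "k div 2 = n" using k by simp
  have S: "(\<Sum>j=1..n. (-1) ^ j * (W ((real k + 1 - 2 * real j) * stp k - x) + W ((real k + 1 - 2 * real j) * stp k + x)))
     = (\<Sum>j=1..n. C * ((if j = n then (-1)^j * G 1 else 0) + (if j = 1 then (-1)^j * (- G k) else 0)
          - (-1)^j * (u j + u (j - 1))))"
  proof (rule sum.cong[OF refl])
    fix j assume j: "j \<in> {1..n}"
    define m where "m = 2*(n-j)+1"
    have e1: "real k + 1 - 2 * real j = real m" using j k by (simp add: m_def of_nat_diff)
    have p: "W (real m * stp k + x) = C * Aapp 1 0 k (Rop k q) (Suc m) y"
      unfolding W_def C_def y_def using W_plus[OF k1(1) x, of 1 0 q m] by (simp add: m_def)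
    have mm: "W (real m * stp k - x) = C * Aapp 1 0 k (Rop k q) m y"
      unfolding W_def C_def y_def using W_minus[OF k1(1) x, of m 1 0 q] by (simp add: m_def)
    have a1: "Aapp 1 0 k (Rop k q) (Suc m) y = - G m - (if j = 1 then G k else 0) - G (m+2)"
      using Aapp_expand[OF k1(2), of "Suc m" 1 0 "Rop k q" y] j k by (auto simp: G_def m_def)
    have a2: "Aapp 1 0 k (Rop k q) m y = (if j = n then G 1 else 0) - G (m-1) - G (m+1)"
      using Aapp_expand[OF k1(2), of m 1 0 "Rop k q" y] j k by (auto simp: G_def m_def)
    have f1: "u j = G (m-1) + G m" "u (j-1) = G (m+1) + G (m+2)" using j
      by (auto simp: u_def m_def Suc_diff_le)
    show "(-1) ^ j * (W ((real k + 1 - 2 * real j) * stp k - x) + W ((real k + 1 - 2 * real j) * stp k + x))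
      = C * ((if j = n then (-1)^j * G 1 else 0) + (if j = 1 then (-1)^j * (- G k) else 0)
          - (-1)^j * (u j + u (j - 1)))"
      unfolding e1 p mm a1 a2 f1 by (simp add: algebra_simps)
  qed
  also have "\<dots> = C * ((-1)^n * G 1 + G k - ((-1) ^ n * u n - u 0))"
    using tel2[of u n] k
    by (simp add: sum_distrib_left[symmetric] sum.distrib sum_subtractf sum.delta)
  finally have S2: "(\<Sum>j=1..n. (-1) ^ j * (W ((real k + 1 - 2 * real j) * stp k - x) + W ((real k + 1 - 2 * real j) * stp k + x)))
       = C * ((-1)^n * G 1 + G k - ((-1) ^ n * u n - u 0))" .
  have g0: "u n = G 1" "u 0 = G k" using k by (auto simp: G_def Gx_def u_def)
  have gk: "G k = q x" using k by (auto simp: G_def Gx_def Rop_def y_def)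
  show ?thesis unfolding nd W_def[symmetric] S2 using g0 gk by (simp add: C_def algebra_simps)
qed

lemma case_vi:
  assumes k: "k = 2 * n + 1" "n \<ge> 1" and x: "0 < x" "x < stp k"
  shows "q x = (-1) ^ ((k + 1) div 2) * (Wfun 1 1 k q x + (\<Sum>j=1..(k - 1) div 2. (-1) ^ j *
                 (Wfun 1 1 k q (2 * real j * stp k + x) + Wfun 1 1 k q (2 * real j * stp k - x))))"
proof -
  define G where "G = Gx k (Rop k q) x"
  define C :: complex where "C = -1/2"
  define W where "W = Wfun 1 1 k q"
  define u where "u j = G (2*j-1) + G (2*j)" for j
  have k1: "k \<ge> 1" "k \<ge> 2" using k by auto
  have nd: "(k - 1) div 2 = n" "(k + 1) div 2 = Suc n" using k by auto
  have W0: "W x = C * (G 1 + G 0 + G 2)"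
  proof -
    have "W x = W (real 0 * stp k + x)" by simp
    also have "\<dots> = C * Aapp 1 1 k (Rop k q) 1 x" unfolding W_def C_def using W_plus[OF k1(1) x, of 1 1 q 0] by simp
    also have "\<dots> = C * (G 1 + G 0 + G 2)" using Aapp_expand[OF k1(2), of 1 1 1 "Rop k q" x] k1 by (simp add: G_def numeral_2_eq_2)
    finally show ?thesis .
  qed
  have S: "(\<Sum>j=1..n. (-1) ^ j * (W (2 * real j * stp k + x) + W (2 * real j * stp k - x)))
     = (\<Sum>j=1..n. C * ((-1)^j * (u j + u (Suc j)) + (if j = n then (-1)^j * G k else 0)))"
  proof (rule sum.cong[OF refl])
    fix j assume j: "j \<in> {1..n}"
    have e1: "2 * real j * stp k + x = real (2*j) * stp k + x" by simp
    have e2: "2 * real j * stp k - x = real (2*j) * stp k - x" by simp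
    have p: "W (2 * real j * stp k + x) = C * Aapp 1 1 k (Rop k q) (Suc (2*j)) x"
      unfolding e1 W_def C_def using W_plus[OF k1(1) x, of 1 1 q "2*j"] by simp
    have m: "W (2 * real j * stp k - x) = C * Aapp 1 1 k (Rop k q) (2*j) x"
      unfolding e2 W_def C_def using W_minus[OF k1(1) x, of "2*j" 1 1 q] j by simp
    have a1: "Aapp 1 1 k (Rop k q) (Suc (2*j)) x = G (2*j) + (if j = n then G k else 0) + G (2*j+2)"
      using Aapp_expand[OF k1(2), of "Suc (2*j)" 1 1 "Rop k q" x] j k by (simp add: G_def)
    have a2: "Aapp 1 1 k (Rop k q) (2*j) x = G (2*j-1) + G (2*j+1)"
      using Aapp_expand[OF k1(2), of "2*j" 1 1 "Rop k q" x] j k by (simp add: G_def)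
    have f1: "u j = G (2*j-1) + G (2*j)" "u (Suc j) = G (2*j+1) + G (2*j+2)" by (auto simp: u_def)
    show "(-1) ^ j * (W (2 * real j * stp k + x) + W (2 * real j * stp k - x))
      = C * ((-1)^j * (u j + u (Suc j)) + (if j = n then (-1)^j * G k else 0))"
      unfolding p m a1 a2 f1 by (simp add: algebra_simps)
  qed
  also have "\<dots> = C * ((-1) ^ n * u (Suc n) - u 1 + (-1)^n * G k)"
    using tel1[of u n] k
    by (simp add: sum_distrib_left[symmetric] sum.distrib sum.delta)
  finally have S2: "(\<Sum>j=1..n. (-1) ^ j * (W (2 * real j * stp k + x) + W (2 * real j * stp k - x)))
     = C * ((-1) ^ n * u (Suc n) - u 1 + (-1)^n * G k)" .
  have g0: "G 0 = 0" "u (Suc n) = G k" "u 1 = G 1 + G 2" using k by (auto simp: G_def Gx_def u_def)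
  have gk: "G k = q x" using k by (auto simp: G_def Gx_def Rop_def)
  have pw: "(-1::complex) ^ n * (-1) ^ n = 1" by (induction n) auto
  show ?thesis unfolding nd W_def[symmetric] W0 S2 using g0 gk pw by (simp add: C_def algebra_simps)
qed

lemma k1_W:
  assumes "0 < x" "x < stp 1"
  shows "Wfun \<alpha> \<beta> 1 q x = (-1) ^ (\<alpha> * \<beta>) / 2 * (2 * (-1) ^ (\<alpha> * (\<beta> + 1)) * (if \<beta> = 1 then 1 else 0)) * q x"
proof -
  have "Wfun \<alpha> \<beta> 1 q x = Wfun \<alpha> \<beta> 1 q (real 0 * stp 1 + x)" by simp
  also have "\<dots> = ((-1) ^ (\<alpha> * \<beta>) / 2) * Aapp \<alpha> \<beta> 1 (Rop 1 q) 1 x"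
    using W_plus[of 1 x \<alpha> \<beta> q 0] assms by simp
  finally show ?thesis by (simp add: Aapp_def Amat_def Rop_def)
qed

theorem lemma3p2:
  fixes k \<alpha> \<beta> :: nat and q :: "real \<Rightarrow> complex"
  assumes "k \<ge> 1" and "\<alpha> \<in> {0,1}" and "\<beta> \<in> {0,1}"
    and "in_L2 q 0 pi"
    and "nondegenerate \<alpha> \<beta> k"
  shows
    "(\<alpha> = 0 \<and> \<beta> = 1 \<and> odd k \<longrightarrow>
       (AE x in lborel. x \<in> {0<..<stp k} \<longrightarrow>
          q x = Wfun 0 1 k q x + (\<Sum>j=1..(k - 1) div 2.
                 Wfun 0 1 k q (2 * real j * stp k + x) - Wfun 0 1 k q (2 * real j * stp k - x))))
   \<and> (\<alpha> = 0 \<and> \<beta> = 1 \<and> even k \<longrightarrow>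
       (AE x in lborel. x \<in> {0<..<stp k} \<longrightarrow>
          q x = (\<Sum>j=1..k div 2.
                 Wfun 0 1 k q ((2 * real j - 1) * stp k + x) - Wfun 0 1 k q ((2 * real j - 1) * stp k - x))))
   \<and> (\<alpha> = 1 \<and> \<beta> = 0 \<and> even k \<longrightarrow>
       (AE x in lborel. x \<in> {0<..<stp k} \<longrightarrow>
          q x = (\<Sum>j=1..k div 2. (-1) ^ j *
                 (Wfun 1 0 k q ((real k + 1 - 2 * real j) * stp k - x)
                  + Wfun 1 0 k q ((real k + 1 - 2 * real j) * stp k + x)))))
   \<and> (\<alpha> = 1 \<and> \<beta> = 1 \<and> odd k \<longrightarrow>
       (AE x in lborel. x \<in> {0<..<stp k} \<longrightarrow>
          q x = (-1) ^ ((k + 1) div 2) * (Wfun 1 1 k q x + (\<Sum>j=1..(k - 1) div 2. (-1) ^ j *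
                 (Wfun 1 1 k q (2 * real j * stp k + x) + Wfun 1 1 k q (2 * real j * stp k - x))))))"
proof -
  have A: "AE x in lborel. x \<in> {0<..<stp k} \<longrightarrow> P x" if "\<And>x. 0 < x \<Longrightarrow> x < stp k \<Longrightarrow> P x" for P
    by (rule AE_I2) (use that in auto)
  show ?thesis
  proof (intro conjI impI)
    assume h: "\<alpha> = 0 \<and> \<beta> = 1 \<and> odd k"
    then obtain n where n: "k = 2 * n + 1" by (metis oddE)
    show "AE x in lborel. x \<in> {0<..<stp k} \<longrightarrow>
          q x = Wfun 0 1 k q x + (\<Sum>j=1..(k - 1) div 2.
                 Wfun 0 1 k q (2 * real j * stp k + x) - Wfun 0 1 k q (2 * real j * stp k - x))"
    proof (rule A)
      fix x assume x: "0 < x" "x < stp k"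
      show "q x = Wfun 0 1 k q x + (\<Sum>j=1..(k - 1) div 2.
                 Wfun 0 1 k q (2 * real j * stp k + x) - Wfun 0 1 k q (2 * real j * stp k - x))"
      proof (cases "n = 0")
        case True
        then show ?thesis using n k1_W[of x 0 1 q] x by simp
      next
        case False
        then show ?thesis using case_iv_odd[OF n _ x] by simp
      qed
    qed
  next
    assume h: "\<alpha> = 0 \<and> \<beta> = 1 \<and> even k"
    then obtain n where n: "k = 2 * n" by (metis evenE)
    have "n \<ge> 1" using n assms(1) by simp
    then show "AE x in lborel. x \<in> {0<..<stp k} \<longrightarrow>
          q x = (\<Sum>j=1..k div 2.
                 Wfun 0 1 k q ((2 * real j - 1) * stp k + x) - Wfun 0 1 k q ((2 * real j - 1) * stp k - x))"
      using case_iv_even[OF n] by (intro A) auto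
  next
    assume h: "\<alpha> = 1 \<and> \<beta> = 0 \<and> even k"
    then obtain n where n: "k = 2 * n" by (metis evenE)
    have "n \<ge> 1" using n assms(1) by simp
    then show "AE x in lborel. x \<in> {0<..<stp k} \<longrightarrow>
          q x = (\<Sum>j=1..k div 2. (-1) ^ j *
                 (Wfun 1 0 k q ((real k + 1 - 2 * real j) * stp k - x)
                  + Wfun 1 0 k q ((real k + 1 - 2 * real j) * stp k + x)))"
      using case_v[OF n] by (intro A) auto
  next
    assume h: "\<alpha> = 1 \<and> \<beta> = 1 \<and> odd k"
    then obtain n where n: "k = 2 * n + 1" by (metis oddE)
    show "AE x in lborel. x \<in> {0<..<stp k} \<longrightarrow>
          q x = (-1) ^ ((k + 1) div 2) * (Wfun 1 1 k q x + (\<Sum>j=1..(k - 1) div 2. (-1) ^ j *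
                 (Wfun 1 1 k q (2 * real j * stp k + x) + Wfun 1 1 k q (2 * real j * stp k - x))))"
    proof (rule A)
      fix x assume x: "0 < x" "x < stp k"
      show "q x = (-1) ^ ((k + 1) div 2) * (Wfun 1 1 k q x + (\<Sum>j=1..(k - 1) div 2. (-1) ^ j *
                 (Wfun 1 1 k q (2 * real j * stp k + x) + Wfun 1 1 k q (2 * real j * stp k - x))))"
      proof (cases "n = 0")
        case True
        then show ?thesis using n k1_W[of x 1 1 q] x by simp
      next
        case False
        then show ?thesis using case_vi[OF n _ x] by simp
      qed
    qed
  qed
qed

end
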